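(* Let $\Lambda$ be a set with $\operatorname{Card}\Lambda\geq\aleph$ and let $(Y,\tau_d)$ be any dendrite. Then there exists an upper semicontinuous decomposition $\mathcal D$ of $(\{0,1\}^\Lambda,\tau_0^\Lambda)$ whose decomposition space $(\mathcal D,\tau(\mathcal D))$ is homeomorphic to $Y$; in particular $(\mathcal D,\tau(\mathcal D))$ is a metrizable space which is a dendrite, although $(\{0,1\}^\Lambda,\tau_0^\Lambda)$ itself is not metrizable.
   Context: $\{0,1\}^\Lambda=\{\varphi:\Lambda\to\{0,1\}\}$ carries the topology $\tau_0^\Lambda$, the product topology of the discrete topology $\tau_0$ on $\{0,1\}$ (base: sets $\{\varphi;\ \varphi(\lambda_i)\in G_{\lambda_i},\ i=1,\dots,n\}$ with $G_{\lambda_i}\subset\{0,1\}$, finitely many $\lambda_i\in\Lambda$). A dendrite is a locally connected, connected, compact metric space containing no simple closed curve. A decomposition $\mathcal D$ of $X$ is a collection of nonempty pairwise disjoint subsets with union $X$; the decomposition topology is $\tau(\mathcal D)=\{\mathcal U\subset\mathcal D;\ \bigcup_{D\in\mathcal U}D \text{ open in } X\}$. $\mathcal D$ is upper semicontinuous if for every $D\in\mathcal D$ and open $U\supseteq D$ there is an open $u\supseteq D$ with $A\subset U$ for all $A\in\mathcal D$ meeting $u$. *)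

theory Defs
  imports "HOL-Analysis.Analysis"
begin

definition cantor_cube :: "'i set \<Rightarrow> ('i \<Rightarrow> nat) topology" where
  "cantor_cube L = product_topology (\<lambda>_. discrete_topology {0::nat, 1}) L"

definition decomposition :: "'a topology \<Rightarrow> 'a set set \<Rightarrow> bool" where
  "decomposition X D \<longleftrightarrow> (\<forall>A\<in>D. A \<noteq> {}) \<and> pairwise disjnt D \<and> \<Union>D = topspace X"

definition decomposition_topology :: "'a topology \<Rightarrow> 'a set set \<Rightarrow> 'a set topology" where
  "decomposition_topology X D = topology (\<lambda>U. U \<subseteq> D \<and> openin X (\<Union>U))"

definition upper_semicontinuous_decomposition :: "'a topology \<Rightarrow> 'a set set \<Rightarrow> bool" where
  "upper_semicontinuous_decomposition X D \<longleftrightarrow> decomposition X D \<and>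
     (\<forall>E\<in>D. \<forall>U. openin X U \<and> E \<subseteq> U \<longrightarrow>
        (\<exists>u. openin X u \<and> E \<subseteq> u \<and> (\<forall>A\<in>D. A \<inter> u \<noteq> {} \<longrightarrow> A \<subseteq> U)))"

definition dendrite :: "'a::metric_space set \<Rightarrow> bool" where
  "dendrite Y \<longleftrightarrow> Y \<noteq> {} \<and> compact Y \<and> connected Y \<and> locally connected Y \<and>
     \<not> (\<exists>C. C \<subseteq> Y \<and> C homeomorphic (sphere (0::complex) 1))"

end

theory Submission
  imports Defs
begin

lemma decomp_topology_openin:
  assumes "pairwise disjnt D"
  shows "openin (decomposition_topology X D) U \<longleftrightarrow> U \<subseteq> D \<and> openin X (\<Union>U)"
proof -
  have "istopology (\<lambda>U. U \<subseteq> D \<and> openin X (\<Union>U))"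
    unfolding istopology_def
  proof (rule conjI; intro allI impI)
    fix S T assume S: "S \<subseteq> D \<and> openin X (\<Union>S)" and T: "T \<subseteq> D \<and> openin X (\<Union>T)"
    have "\<Union>(S \<inter> T) = \<Union>S \<inter> \<Union>T"
    proof
      show "\<Union>S \<inter> \<Union>T \<subseteq> \<Union>(S \<inter> T)"
      proof
        fix x assume "x \<in> \<Union>S \<inter> \<Union>T"
        then obtain A B where "A \<in> S" "B \<in> T" "x \<in> A" "x \<in> B" by auto
        with S T assms have "A = B" unfolding pairwise_def disjnt_def by blast
        then show "x \<in> \<Union>(S \<inter> T)" using \<open>A \<in> S\<close> \<open>B \<in> T\<close> \<open>x \<in> A\<close> by blast
      qed
    qed auto
    then show "S \<inter> T \<subseteq> D \<and> openin X (\<Union>(S \<inter> T))" using S T by (metis openin_Int inf.coboundedI1)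
  next
    fix K assume "\<forall>K\<in>K. K \<subseteq> D \<and> openin X (\<Union>K)"
    show "\<Union>K \<subseteq> D \<and> openin X (\<Union>(\<Union>K))"
    proof
      show "\<Union>K \<subseteq> D" using \<open>\<forall>K\<in>K. K \<subseteq> D \<and> openin X (\<Union>K)\<close> by blast
      have "\<Union>(\<Union>K) = \<Union>(Union ` K)" by blast
      then show "openin X (\<Union>(\<Union>K))" using \<open>\<forall>K\<in>K. K \<subseteq> D \<and> openin X (\<Union>K)\<close>
        by (metis (no_types, lifting) imageE openin_Union)
    qed
  qed
  then show ?thesis unfolding decomposition_topology_def by simp
qed

lemma not_metrizable:
  assumes "\<exists>f::real \<Rightarrow> 'i. inj f \<and> range f \<subseteq> L"
  shows "\<not> metrizable_space (cantor_cube (L::'i set))"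
proof
  assume m: "metrizable_space (cantor_cube L)"
  obtain f :: "real \<Rightarrow> 'i" where f: "inj f" "range f \<subseteq> L" using assms by blast
  have "uncountable L"
  proof
    assume "countable L"
    then have "countable (range f)" using f countable_subset by blast
    then have "countable (UNIV::real set)" using f countable_image_inj_on by blast
    then show False using uncountable_UNIV_real by blast
  qed
  have "(\<lambda>i\<in>L. 0::nat) \<in> topspace (cantor_cube L)" unfolding cantor_cube_def by auto
  then have nt: "cantor_cube L \<noteq> trivial_topology" by auto
  have "{i \<in> L. \<not> (\<exists>a. topspace (discrete_topology {0::nat,1}) \<subseteq> {a})} = L" by auto
  then show False using m nt \<open>uncountable L\<close> unfolding cantor_cube_def
    by (simp add: metrizable_space_product_topology)
qed

lemma decomp_from_map:
  fixes G :: "'x \<Rightarrow> 'a::metric_space"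
  assumes X: "compact_space X" and G: "continuous_map X euclidean G" and img: "G ` topspace X = Y"
  shows "\<exists>D. upper_semicontinuous_decomposition X D \<and>
             decomposition_topology X D homeomorphic_space subtopology euclidean Y"
proof -
  define fib where "fib y = {x \<in> topspace X. G x = y}" for y
  define D where "D = fib ` Y"
  have fibne: "fib y \<noteq> {}" if "y \<in> Y" for y using that img unfolding fib_def by auto
  have closedimg: "closed (G ` K)" if "closedin X K" for K
  proof -
    have "compactin X K" using X that closedin_compact_space by blast
    then have "compactin euclidean (G ` K)" using G image_compactin by blast
    then show ?thesis by (simp add: compact_imp_closed)
  qed
  have dec: "decomposition X D"
    unfolding decomposition_def D_def
  proof (intro conjI)
    show "\<forall>A\<in>fib ` Y. A \<noteq> {}" using fibne by blast
    show "pairwise disjnt (fib ` Y)" unfolding pairwise_def disjnt_def fib_def by auto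
    show "\<Union> (fib ` Y) = topspace X" unfolding fib_def using img by auto
  qed
  have pd: "pairwise disjnt D" using dec decomposition_def by blast
  have opD: "openin (decomposition_topology X D) U \<longleftrightarrow> U \<subseteq> D \<and> openin X (\<Union>U)" for U
    using decomp_topology_openin[OF pd] .
  have tsD: "topspace (decomposition_topology X D) = D"
  proof -
    have "openin (decomposition_topology X D) D" using opD dec unfolding decomposition_def by auto
    then have "D \<subseteq> topspace (decomposition_topology X D)" by (simp add: openin_subset)
    moreover have "topspace (decomposition_topology X D) \<subseteq> D"
      using opD openin_topspace by blast
    ultimately show ?thesis by blast
  qed
  have usc: "upper_semicontinuous_decomposition X D"
    unfolding upper_semicontinuous_decomposition_def
  proof (intro conjI dec ballI allI impI)
    fix E U assume E: "E \<in> D" and U: "openin X U \<and> E \<subseteq> U"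
    obtain y where y: "y \<in> Y" "E = fib y" using E D_def by blast
    define K where "K = topspace X - U"
    have cK: "closedin X K" using U K_def by auto
    define u where "u = topspace X - {x \<in> topspace X. G x \<in> G ` K}"
    have "closedin X {x \<in> topspace X. G x \<in> G ` K}"
      using closedin_continuous_map_preimage[OF G, of "G ` K"] closedimg[OF cK] by simp
    then have ou: "openin X u" unfolding u_def by auto
    have "E \<subseteq> u"
    proof
      fix x assume "x \<in> E"
      then have x: "x \<in> topspace X" "G x = y" using y fib_def by auto
      have "G x \<notin> G ` K"
      proof
        assume "G x \<in> G ` K"
        then obtain k where "k \<in> K" "G k = y" using x by auto
        then have "k \<in> E" using y K_def fib_def by auto
        then show False using U \<open>k \<in> K\<close> K_def by auto
      qed
      then show "x \<in> u" using x u_def by auto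
    qed
    moreover have "\<forall>A\<in>D. A \<inter> u \<noteq> {} \<longrightarrow> A \<subseteq> U"
    proof (intro ballI impI)
      fix A assume A: "A \<in> D" "A \<inter> u \<noteq> {}"
      obtain z where z: "A = fib z" using A D_def by blast
      obtain x where "x \<in> A" "x \<in> u" using A by blast
      then have "z \<notin> G ` K" using z fib_def u_def by auto
      then show "A \<subseteq> U" using z fib_def K_def by auto
    qed
    ultimately show "\<exists>u. openin X u \<and> E \<subseteq> u \<and> (\<forall>A\<in>D. A \<inter> u \<noteq> {} \<longrightarrow> A \<subseteq> U)"
      using ou by blast
  qed
  define \<phi> where "\<phi> A = G (SOME x. x \<in> A)" for A
  have phifib: "\<phi> (fib y) = y" if "y \<in> Y" for y
  proof -
    have "(SOME x. x \<in> fib y) \<in> fib y" using fibne[OF that] by (meson ex_in_conv someI_ex)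
    then show ?thesis unfolding \<phi>_def fib_def by auto
  qed
  have "homeomorphic_maps (decomposition_topology X D) (subtopology euclidean Y) \<phi> fib"
    unfolding homeomorphic_maps_def
  proof (intro conjI ballI)
    show "continuous_map (decomposition_topology X D) (subtopology euclidean Y) \<phi>"
      unfolding continuous_map_def
    proof (intro conjI allI impI)
      show "\<phi> \<in> topspace (decomposition_topology X D) \<rightarrow> topspace (subtopology euclidean Y)"
        using tsD phifib D_def by auto
      fix V assume "openin (subtopology euclidean Y) V"
      then obtain T where T: "open T" "V = T \<inter> Y" by (auto simp: openin_subtopology)
      have "{A \<in> topspace (decomposition_topology X D). \<phi> A \<in> V} \<subseteq> D" using tsD by auto
      moreover have "\<Union>{A \<in> topspace (decomposition_topology X D). \<phi> A \<in> V} = {x \<in> topspace X. G x \<in> T}"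
      proof
        show "\<Union>{A \<in> topspace (decomposition_topology X D). \<phi> A \<in> V} \<subseteq> {x \<in> topspace X. G x \<in> T}"
          using tsD D_def phifib T fib_def by auto
        show "{x \<in> topspace X. G x \<in> T} \<subseteq> \<Union>{A \<in> topspace (decomposition_topology X D). \<phi> A \<in> V}"
        proof
          fix x assume x: "x \<in> {x \<in> topspace X. G x \<in> T}"
          then have "G x \<in> Y" using img by auto
          then have "fib (G x) \<in> D" "\<phi> (fib (G x)) \<in> V" "x \<in> fib (G x)"
            using x D_def phifib T fib_def by auto
          then show "x \<in> \<Union>{A \<in> topspace (decomposition_topology X D). \<phi> A \<in> V}" using tsD by blast
        qed
      qed
      moreover have "openin X {x \<in> topspace X. G x \<in> T}"
        using openin_continuous_map_preimage[OF G, of T] T by simp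
      ultimately show "openin (decomposition_topology X D) {A \<in> topspace (decomposition_topology X D). \<phi> A \<in> V}"
        using opD by simp
    qed
    show "continuous_map (subtopology euclidean Y) (decomposition_topology X D) fib"
      unfolding continuous_map_def
    proof (intro conjI allI impI)
      show "fib \<in> topspace (subtopology euclidean Y) \<rightarrow> topspace (decomposition_topology X D)"
        using tsD D_def by auto
      fix U assume "openin (decomposition_topology X D) U"
      then have U: "U \<subseteq> D" "openin X (\<Union>U)" using opD by auto
      define K where "K = topspace X - \<Union>U"
      have cK: "closedin X K" using U K_def by auto
      have eq: "{y \<in> topspace (subtopology euclidean Y). fib y \<in> U} = (- (G ` K)) \<inter> Y"
      proof (rule set_eqI, rule iffI)
        fix y assume y: "y \<in> {y \<in> topspace (subtopology euclidean Y). fib y \<in> U}"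
        have "y \<notin> G ` K"
        proof
          assume "y \<in> G ` K"
          then obtain k where "k \<in> K" "G k = y" by auto
          then have "k \<in> fib y" using K_def fib_def by auto
          then show False using y \<open>k \<in> K\<close> K_def by auto
        qed
        then show "y \<in> (- (G ` K)) \<inter> Y" using y by auto
      next
        fix y assume y: "y \<in> (- (G ` K)) \<inter> Y"
        show "y \<in> {y \<in> topspace (subtopology euclidean Y). fib y \<in> U}"
        proof (rule ccontr)
          assume nU: "y \<notin> {y \<in> topspace (subtopology euclidean Y). fib y \<in> U}"
          obtain k where k: "k \<in> fib y" using fibne y by auto
          have "k \<notin> \<Union>U"
          proof
            assume "k \<in> \<Union>U"
            then obtain A where "A \<in> U" "k \<in> A" by blast
            then obtain z where "A = fib z" using U D_def by blast
            then have "A = fib y" using k \<open>k \<in> A\<close> fib_def by auto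
            then show False using nU y \<open>A \<in> U\<close> by auto
          qed
          then have "k \<in> K" using k K_def fib_def by auto
          then show False using k y fib_def by auto
        qed
      qed
      show "openin (subtopology euclidean Y) {y \<in> topspace (subtopology euclidean Y). fib y \<in> U}"
        unfolding eq openin_subtopology using closedimg[OF cK]
        by (metis open_Compl open_openin)
    qed
    fix A assume "A \<in> topspace (decomposition_topology X D)"
    then show "fib (\<phi> A) = A" using tsD D_def phifib by auto
  next
    fix y assume "y \<in> topspace (subtopology euclidean Y)"
    then show "\<phi> (fib y) = y" using phifib by auto
  qed
  then show ?thesis using usc homeomorphic_space_def by blast
qed


fun tseq :: "(nat \<Rightarrow> 'x \<Rightarrow> 'a::metric_space) \<Rightarrow> nat \<Rightarrow> 'x \<Rightarrow> 'a" where
  "tseq s 0 x = s 0 x"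
| "tseq s (Suc n) x = (if dist (tseq s n x) (s (Suc n) x) \<le> 2*(1/2)^n then s (Suc n) x else tseq s n x)"

lemma tseq_in: "(\<And>n. s n x \<in> Y) \<Longrightarrow> tseq s n x \<in> Y"
  by (induction n) auto

lemma tseq_step: "dist (tseq s n x) (tseq s (Suc n) x) \<le> 2*(1/2)^n"
  by auto

lemma tseq_far: "dist (tseq s n x) (tseq s (n+k) x) \<le> 4*(1/2)^n - 4*(1/2)^(n+k)"
proof (induction k)
  case 0 then show ?case by simp
next
  case (Suc k)
  have "dist (tseq s n x) (tseq s (n + Suc k) x) \<le> dist (tseq s n x) (tseq s (n+k) x) + dist (tseq s (n+k) x) (tseq s (Suc (n+k)) x)"
    by (simp add: dist_triangle)
  also have "\<dots> \<le> 4*(1/2)^n - 4*(1/2)^(n+k) + 2*(1/2)^(n+k)"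
    using Suc tseq_step[of s "n+k" x] by linarith
  also have "\<dots> = 4*(1/2)^n - 4*(1/2)^(n+Suc k)" by simp
  finally show ?case .
qed

lemma tseq_far': assumes "n \<le> k" shows "dist (tseq s n x) (tseq s k x) \<le> 4*(1/2)^n"
proof -
  have "k = n + (k-n)" using assms by simp
  then have "dist (tseq s n x) (tseq s k x) \<le> 4*(1/2)^n - 4*(1/2)^k"
    using tseq_far[of s n x "k-n"] by metis
  moreover have "(0::real) \<le> (1/2)^k" by simp
  ultimately show ?thesis by linarith
qed

lemma tseq_cauchy: "Cauchy (\<lambda>n. tseq s n x)"
proof (rule metric_CauchyI)
  fix e :: real assume e: "e > 0"
  obtain M where M: "(1/2::real)^M < e/8" using real_arch_pow_inv[of "e/8" "1/2::real"] e by auto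
  show "\<exists>M. \<forall>m\<ge>M. \<forall>n\<ge>M. dist (tseq s m x) (tseq s n x) < e"
  proof (intro exI allI impI)
    fix m n assume "m \<ge> M" "n \<ge> M"
    have "dist (tseq s m x) (tseq s n x) \<le> dist (tseq s M x) (tseq s m x) + dist (tseq s M x) (tseq s n x)"
      by (simp add: dist_triangle3)
    also have "\<dots> \<le> 8*(1/2)^M" using tseq_far'[OF \<open>m \<ge> M\<close>, of s x] tseq_far'[OF \<open>n \<ge> M\<close>, of s x] by linarith
    finally show "dist (tseq s m x) (tseq s n x) < e" using M by linarith
  qed
qed

lemma tseq_dep:
  assumes "\<And>k. k \<le> n \<Longrightarrow> s k x = s k y"
  shows "tseq s n x = tseq s n y"
  using assms by (induction n) auto

lemma cantor_onto:
  fixes L :: "'i set" and Y :: "'a::metric_space set" and f :: "real \<Rightarrow> 'i"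
  assumes f: "inj f" "range f \<subseteq> L" and Y: "compact Y" "Y \<noteq> {}"
  shows "\<exists>G. continuous_map (cantor_cube L) euclidean G \<and> G ` topspace (cantor_cube L) = Y"
proof -
  have ts: "topspace (cantor_cube L) = PiE L (\<lambda>_. {0,1})" unfolding cantor_cube_def by simp
  have ex1: "\<forall>n. \<exists>k. finite k \<and> k \<subseteq> Y \<and> Y \<subseteq> (\<Union>x\<in>k. ball x ((1/2::real)^n))"
    using seq_compact_imp_totally_bounded[OF compact_imp_seq_compact[OF Y(1)]] by simp
  obtain F where F0: "\<forall>n. finite (F n) \<and> F n \<subseteq> Y \<and> Y \<subseteq> (\<Union>x\<in>F n. ball x ((1/2::real)^n))"
    using choice[OF ex1] by blast
  then have F: "\<And>n. finite (F n)" "\<And>n. F n \<subseteq> Y" "\<And>n. Y \<subseteq> (\<Union>x\<in>F n. ball x ((1/2::real)^n))"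
    by auto
  define m where "m n = card (F n)" for n
  have Fne: "F n \<noteq> {}" for n
  proof
    assume "F n = {}"
    then have "Y \<subseteq> {}" using F(3)[of n] by simp
    then show False using Y(2) by simp
  qed
  have m0: "0 < m n" for n unfolding m_def using F(1) Fne by (simp add: card_gt_0_iff)
  have ex2: "\<forall>n. \<exists>h. bij_betw h {0..<m n} (F n)" unfolding m_def using ex_bij_betw_nat_finite F(1) by blast
  obtain h where h0: "\<forall>n. bij_betw (h n) {0..<m n} (F n)" using choice[OF ex2] by blast
  then have h: "\<And>n. bij_betw (h n) {0..<m n} (F n)" by blast
  define c where "c n j = f (real (prod_encode (n,j)))" for n j
  have cinj: "c n j = c n' j' \<Longrightarrow> n = n' \<and> j = j'" for n j n' j'
  proof -
    assume "c n j = c n' j'"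
    then have "real (prod_encode (n,j)) = real (prod_encode (n',j'))" unfolding c_def by (rule injD[OF f(1)])
    then have "prod_encode (n,j) = prod_encode (n',j')" by simp
    then show ?thesis using prod_encode_eq by simp
  qed
  have cL: "c n j \<in> L" for n j using f(2) unfolding c_def by blast
  define idx where "idx n x = Max (insert 0 {j. j < m n \<and> x (c n j) = (1::nat)})" for n x
  have idx_lt: "idx n x < m n" for n x
  proof -
    have "finite {j. j < m n \<and> x (c n j) = (1::nat)}" by simp
    then show ?thesis unfolding idx_def using m0 by (subst Max_less_iff) auto
  qed
  define s where "s n x = h n (idx n x)" for n x
  have sY: "s n x \<in> Y" for n x
    using idx_lt[of n x] h[of n] F(2)[of n] unfolding s_def bij_betw_def by auto
  define t where "t n x = tseq s n x" for n x
  have tY: "t n x \<in> Y" for n x unfolding t_def by (rule tseq_in) (rule sY)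
  have cY: "complete Y" by (rule compact_imp_complete[OF Y(1)])
  have "\<exists>l\<in>Y. (\<lambda>n. t n x) \<longlonglongrightarrow> l" for x
  proof -
    have imp: "(\<forall>n. t n x \<in> Y) \<and> Cauchy (\<lambda>n. t n x) \<longrightarrow> (\<exists>l\<in>Y. (\<lambda>n. t n x) \<longlonglongrightarrow> l)"
      using spec[OF cY[unfolded complete_def], of "\<lambda>n. t n x"] by simp
    have "Cauchy (\<lambda>n. t n x)" unfolding t_def by (rule tseq_cauchy)
    then show ?thesis using imp tY by simp
  qed
  then have conv: "(\<lambda>n. t n x) \<longlonglongrightarrow> lim (\<lambda>n. t n x)" and limY: "lim (\<lambda>n. t n x) \<in> Y" for x
    using limI by blast+
  define G where "G x = lim (\<lambda>n. t n x)" for x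
  have tG: "dist (t n x) (G x) \<le> 4*(1/2)^n" for n x
  proof -
    have "(\<lambda>k. dist (t n x) (t k x)) \<longlonglongrightarrow> dist (t n x) (G x)"
      using conv G_def by (intro tendsto_intros) auto
    moreover have "\<forall>k\<ge>n. dist (t n x) (t k x) \<le> 4*(1/2)^n"
    proof (intro allI impI)
      fix k assume "n \<le> k"
      then show "dist (t n x) (t k x) \<le> 4*(1/2)^n" unfolding t_def by (rule tseq_far')
    qed
    ultimately show ?thesis using LIMSEQ_le_const2 by blast
  qed
  define T where "T n = (\<Union>k\<le>n. (\<lambda>j. c k j) ` {..<m k})" for n
  have Tfin: "finite (T n)" for n unfolding T_def by auto
  have TL: "T n \<subseteq> L" for n unfolding T_def using cL by auto
  have sdep: "s k x = s k y" if "\<forall>i\<in>T n. x i = y i" "k \<le> n" for k n x y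
  proof -
    have "\<forall>j<m k. x (c k j) = y (c k j)" using that unfolding T_def by blast
    then have "{j. j < m k \<and> x (c k j) = (1::nat)} = {j. j < m k \<and> y (c k j) = 1}" by auto
    then show ?thesis unfolding s_def idx_def by simp
  qed
  have tdep: "t n x = t n y" if "\<forall>i\<in>T n. x i = y i" for n x y
    unfolding t_def by (rule tseq_dep) (use sdep that in blast)
  have cont: "continuous_map (cantor_cube L) euclidean G"
    unfolding continuous_map_def
  proof (intro conjI allI impI)
    show "G \<in> topspace (cantor_cube L) \<rightarrow> topspace euclidean" by simp
    fix V :: "'a set" assume "openin euclidean V"
    then have V: "open V" by simp
    show "openin (cantor_cube L) {x \<in> topspace (cantor_cube L). G x \<in> V}"
    proof (subst openin_subopen, intro ballI)
      fix x assume x: "x \<in> {x \<in> topspace (cantor_cube L). G x \<in> V}"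
      obtain e where e: "e > 0" "\<And>y. dist y (G x) < e \<Longrightarrow> y \<in> V"
        using V x unfolding open_dist by blast
      obtain n where n: "(1/2::real)^n < e/8" using real_arch_pow_inv[of "e/8" "1/2::real"] e by auto
      define S where "S i = (if i \<in> T n then {x i} else {0::nat,1})" for i
      define N where "N = PiE L S"
      have xin: "x \<in> PiE L (\<lambda>_. {0,1})" using x ts by auto
      have "openin (cantor_cube L) N"
        unfolding N_def cantor_cube_def
      proof (subst openin_PiE_gen, rule disjI2, intro conjI ballI)
        show "finite {i \<in> L. S i \<noteq> topspace (discrete_topology {0::nat, 1})}"
          by (rule finite_subset[OF _ Tfin[of n]]) (auto simp: S_def)
        fix i assume "i \<in> L"
        then show "openin (discrete_topology {0::nat, 1}) (S i)"
          using xin by (auto simp: S_def PiE_iff)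
      qed
      moreover have "x \<in> N" using xin unfolding N_def S_def by (auto simp: PiE_iff)
      moreover have "N \<subseteq> {x \<in> topspace (cantor_cube L). G x \<in> V}"
      proof
        fix y assume y: "y \<in> N"
        have Ssub: "S i \<subseteq> {0,1}" if "i \<in> L" for i using xin that by (auto simp: S_def PiE_iff)
        have yts: "y \<in> topspace (cantor_cube L)" using y Ssub unfolding ts N_def PiE_iff by blast
        have "\<forall>i\<in>T n. y i = x i"
        proof
          fix i assume i: "i \<in> T n"
          then have "i \<in> L" using TL by blast
          then have "y i \<in> S i" using y unfolding N_def PiE_iff by blast
          then show "y i = x i" using i unfolding S_def by simp
        qed
        then have "t n y = t n x" using tdep[of n y x] by blast
        then have "dist (G y) (G x) \<le> dist (G y) (t n y) + dist (t n x) (G x)"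
          by (simp add: dist_triangle)
        also have "\<dots> \<le> 8*(1/2)^n" using tG[of n y] tG[of n x] by (simp add: dist_commute)
        finally have "dist (G y) (G x) < e" using n by linarith
        then show "y \<in> {x \<in> topspace (cantor_cube L). G x \<in> V}" using e yts by auto
      qed
      ultimately show "\<exists>T. openin (cantor_cube L) T \<and> x \<in> T \<and> T \<subseteq> {x \<in> topspace (cantor_cube L). G x \<in> V}"
        by blast
    qed
  qed
  have "Y \<subseteq> G ` topspace (cantor_cube L)"
  proof
    fix y assume y: "y \<in> Y"
    have "\<exists>k. k < m n \<and> dist (h n k) y < (1/2)^n" for n
    proof -
      obtain z where z: "z \<in> F n" "y \<in> ball z ((1/2)^n)" using F(3)[of n] y by blast
      then have "z \<in> h n ` {0..<m n}" using h[of n] unfolding bij_betw_def by simp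
      then obtain k where "k < m n" "z = h n k" by auto
      then show ?thesis using z by auto
    qed
    then have ex3: "\<forall>n. \<exists>k. k < m n \<and> dist (h n k) y < (1/2)^n" by blast
    obtain kk where kk0: "\<forall>n. kk n < m n \<and> dist (h n (kk n)) y < (1/2)^n" using choice[OF ex3] by blast
    then have kk: "\<And>n. kk n < m n" "\<And>n. dist (h n (kk n)) y < (1/2)^n" by auto
    define p where "p i = (if i \<in> L then (if \<exists>n. i = c n (kk n) then 1::nat else 0) else undefined)" for i
    have pts: "p \<in> topspace (cantor_cube L)" unfolding ts p_def by (auto simp: PiE_iff extensional_def)
    have pc: "p (c n j) = 1 \<longleftrightarrow> j = kk n" for n j
      using cinj cL unfolding p_def by auto
    have "idx n p = kk n" for n
    proof -
      have "{j. j < m n \<and> p (c n j) = 1} = {kk n}" using pc kk(1)[of n] by auto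
      then show ?thesis unfolding idx_def by simp
    qed
    then have sp: "s n p = h n (kk n)" for n using s_def by simp
    have tp: "t n p = s n p" for n
    proof (induction n)
      case 0 then show ?case by (simp add: t_def)
    next
      case (Suc n)
      have "dist (s n p) (s (Suc n) p) \<le> dist (s n p) y + dist (s (Suc n) p) y"
        by (simp add: dist_triangle2)
      also have "\<dots> \<le> 2*(1/2)^n"
      proof -
        have "dist (s n p) y < (1/2)^n" "dist (s (Suc n) p) y < (1/2)^Suc n" using kk(2)[of n] kk(2)[of "Suc n"] sp[of n] sp[of "Suc n"] by simp_all
        moreover have "(1/2::real)^Suc n \<le> (1/2)^n" by (simp add: power_decreasing)
        ultimately show ?thesis by linarith
      qed
      finally show ?case using Suc by (simp add: t_def)
    qed
    have "(\<lambda>n. t n p) \<longlonglongrightarrow> y"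
    proof (rule tendsto_sandwich[of "\<lambda>_. 0" _ sequentially "\<lambda>n. (1/2::real)^n", THEN tendsto_dist_iff[THEN iffD2]])
      show "\<forall>\<^sub>F n in sequentially. 0 \<le> dist (t n p) y" by simp
      show "\<forall>\<^sub>F n in sequentially. dist (t n p) y \<le> (1/2)^n"
        using kk(2) tp sp by (simp add: less_imp_le)
      show "(\<lambda>n. 0::real) \<longlonglongrightarrow> 0" by simp
      show "(\<lambda>n. (1/2::real)^n) \<longlonglongrightarrow> 0" by (simp add: LIMSEQ_realpow_zero)
    qed
    then have "lim (\<lambda>n. t n p) = y" using LIMSEQ_unique[OF conv[of p]] by blast
    then have "G p = y" unfolding G_def .
    then show "y \<in> G ` topspace (cantor_cube L)" using pts by blast
  qed
  moreover have "G ` topspace (cantor_cube L) \<subseteq> Y" using limY G_def by auto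
  ultimately show ?thesis using cont by blast
qed

theorem mainTheorem3:
  fixes L :: "'i set" and Y :: "'a::metric_space set"
  assumes "\<exists>f::real \<Rightarrow> 'i. inj f \<and> range f \<subseteq> L"
    and "dendrite Y"
  shows "\<exists>D. upper_semicontinuous_decomposition (cantor_cube L) D \<and>
             decomposition_topology (cantor_cube L) D homeomorphic_space subtopology euclidean Y \<and>
             metrizable_space (decomposition_topology (cantor_cube L) D) \<and>
             \<not> metrizable_space (cantor_cube L)"
proof -
  obtain f :: "real \<Rightarrow> 'i" where f: "inj f" "range f \<subseteq> L" using assms(1) by blast
  have Y: "compact Y" "Y \<noteq> {}" using assms(2) unfolding dendrite_def by auto
  obtain G where G: "continuous_map (cantor_cube L) euclidean G" "G ` topspace (cantor_cube L) = Y"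
    using cantor_onto[OF f Y] by blast
  have cs: "compact_space (cantor_cube L)"
    unfolding cantor_cube_def by (simp add: compact_space_product_topology compact_space_discrete_topology)
  obtain D where D: "upper_semicontinuous_decomposition (cantor_cube L) D"
     "decomposition_topology (cantor_cube L) D homeomorphic_space subtopology euclidean Y"
    using decomp_from_map[OF cs G] by blast
  have "metrizable_space (subtopology euclidean Y)"
    by (rule metrizable_space_subtopology[OF metrizable_space_euclidean])
  then have "metrizable_space (decomposition_topology (cantor_cube L) D)"
    using homeomorphic_metrizable_space[OF D(2)] by simp
  then show ?thesis using D not_metrizable[OF assms(1)] by blast
qed

end
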